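(* Let $F$ be an algebraically closed field and $R$ an $F$-algebra. Let $\sigma$ be an $F$-algebra automorphism of $R$ and $\delta$ a $\sigma$-derivation of $R$, and set $T=R[x;\sigma,\delta]$. Let $\Xi(T)$ (resp. $\Xi(R)$) be the set of ideals $M$ of $T$ (resp. of $R$) with $T/M\cong F$ (resp. $R/M\cong F$), and let $\Psi:\Xi(T)\to\Xi(R)$, $M\mapsto M\cap R$. Consider for $\mathfrak m\in\Xi(R)$ the conditions (a) $\delta([R,R])\subseteq\mathfrak m$; (b) $\sigma(\mathfrak m)=\mathfrak m$ and $\delta(\mathfrak m)\subseteq\mathfrak m$; (c) $\sigma(\mathfrak m)\neq\mathfrak m$. (i) If $M\in\Xi(T)$ and $\mathfrak m=\Psi(M)$, then (a) holds for $\mathfrak m$, and either (b) or (c) holds for $\mathfrak m$. (ii) If $\mathfrak m\in\Xi(R)$ satisfies (b) (and hence (a)), then $\mathfrak mT$ is an ideal of $T$ with $T/\mathfrak mT\cong F[x]$, so that $\Psi^{-1}(\mathfrak m)=\{\langle\mathfrak mT,x-\lambda\rangle:\lambda\in F\}\cong\mathbb A^1_F$. (iii) If $\mathfrak m\in\Xi(R)$ satisfies (a) and (c), then there is a unique $M\in\Xi(T)$ with $\Psi(M)=\mathfrak m$.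
   Context: $[R,R]$ denotes the set of commutators $ab-ba$, $a,b\in R$. A $\sigma$-derivation $\delta$ is an $F$-linear map with $\delta(ab)=\delta(a)b+\sigma(a)\delta(b)$, and $R[x;\sigma,\delta]$ is the algebra generated by $R$ and $x$ subject to $xr-\sigma(r)x=\delta(r)$ for $r\in R$. *)

theory Defs
  imports "HOL-Computational_Algebra.Polynomial"
begin

definition rhom :: "('a::ring_1 \<Rightarrow> 'b::ring_1) \<Rightarrow> bool" where
  "rhom f \<longleftrightarrow> f 1 = 1 \<and> (\<forall>a b. f (a + b) = f a + f b) \<and> (\<forall>a b. f (a * b) = f a * f b)"

definition falg :: "('f::field \<Rightarrow> 'a::ring_1) \<Rightarrow> bool" where
  "falg e \<longleftrightarrow> rhom e \<and> (\<forall>c a. e c * a = a * e c)"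

definition falg_hom :: "('f::field \<Rightarrow> 'a::ring_1) \<Rightarrow> ('f \<Rightarrow> 'b::ring_1) \<Rightarrow> ('a \<Rightarrow> 'b) \<Rightarrow> bool" where
  "falg_hom eA eB \<phi> \<longleftrightarrow> rhom \<phi> \<and> (\<forall>c. \<phi> (eA c) = eB c)"

definition falg_aut :: "('f::field \<Rightarrow> 'a::ring_1) \<Rightarrow> ('a \<Rightarrow> 'a) \<Rightarrow> bool" where
  "falg_aut e \<sigma> \<longleftrightarrow> bij \<sigma> \<and> falg_hom e e \<sigma>"

definition sigma_derivation :: "('f::field \<Rightarrow> 'a::ring_1) \<Rightarrow> ('a \<Rightarrow> 'a) \<Rightarrow> ('a \<Rightarrow> 'a) \<Rightarrow> bool" where
  "sigma_derivation e \<sigma> \<delta> \<longleftrightarrow>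
     (\<forall>a b. \<delta> (a + b) = \<delta> a + \<delta> b) \<and> (\<forall>c a. \<delta> (e c * a) = e c * \<delta> a) \<and>
     (\<forall>a b. \<delta> (a * b) = \<delta> a * b + \<sigma> a * \<delta> b)"

definition two_ideal :: "'a::ring_1 set \<Rightarrow> bool" where
  "two_ideal I \<longleftrightarrow> 0 \<in> I \<and> (\<forall>a\<in>I. \<forall>b\<in>I. a + b \<in> I) \<and> (\<forall>a\<in>I. - a \<in> I) \<and>
     (\<forall>a\<in>I. \<forall>r. r * a \<in> I \<and> a * r \<in> I)"

definition ideal_gen :: "'a::ring_1 set \<Rightarrow> 'a set" where
  "ideal_gen S = \<Inter> {I. two_ideal I \<and> S \<subseteq> I}"

(* Xi(A): ideals M of the F-algebra A with A/M \<cong> F as F-algebras,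
   i.e. M is the kernel of an F-algebra homomorphism A -> F (first isomorphism theorem;
   such a homomorphism is automatically surjective) *)
definition Xi :: "('f::field \<Rightarrow> 'a::ring_1) \<Rightarrow> 'a set set" where
  "Xi e = {M. two_ideal M \<and> (\<exists>\<phi> :: 'a \<Rightarrow> 'f. falg_hom e id \<phi> \<and> M = {a. \<phi> a = 0})}"

(* T together with the embedding iota : R -> T and the element x is the Ore extension R[x;sigma,delta]:
   iota is an injective unital ring hom, x r = sigma(r) x + delta(r), and T is a free left R-module
   with basis 1, x, x^2, ... *)
definition ore_extension :: "('r::ring_1 \<Rightarrow> 'r) \<Rightarrow> ('r \<Rightarrow> 'r) \<Rightarrow> ('r \<Rightarrow> 't::ring_1) \<Rightarrow> 't \<Rightarrow> bool" where
  "ore_extension \<sigma> \<delta> \<iota> x \<longleftrightarrow> rhom \<iota> \<and> inj \<iota> \<and>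
     (\<forall>r. x * \<iota> r = \<iota> (\<sigma> r) * x + \<iota> (\<delta> r)) \<and>
     (\<forall>t. \<exists>!c :: nat \<Rightarrow> 'r. finite {i. c i \<noteq> 0} \<and> t = (\<Sum>i\<in>{i. c i \<noteq> 0}. \<iota> (c i) * x ^ i))"

(* Psi(M) = M \<inter> R, with R identified with its image in T *)
definition Psi :: "('r \<Rightarrow> 't) \<Rightarrow> 't set \<Rightarrow> 'r set" where
  "Psi \<iota> M = \<iota> -` M"

definition ext_ideal :: "('r \<Rightarrow> 't::ring_1) \<Rightarrow> 'r set \<Rightarrow> 't set" where
  "ext_ideal \<iota> m = {t. \<exists>(n::nat) a s. (\<forall>j<n. a j \<in> m) \<and> t = (\<Sum>j<n. \<iota> (a j) * s j)}"

definition commutators :: "'a::ring_1 set" where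
  "commutators = {a * b - b * a | a b. True}"

end

theory Submission
  imports Defs
begin


lemma rhom_0: "rhom f \<Longrightarrow> f 0 = 0"
  unfolding rhom_def by (metis add_cancel_right_right add.right_neutral)
lemma rhom_add: "rhom f \<Longrightarrow> f (a + b) = f a + f b" unfolding rhom_def by blast
lemma rhom_mult: "rhom f \<Longrightarrow> f (a * b) = f a * f b" unfolding rhom_def by blast
lemma rhom_1: "rhom f \<Longrightarrow> f 1 = 1" unfolding rhom_def by blast
lemma rhom_neg: "rhom f \<Longrightarrow> f (- a) = - f a"
  by (metis add.right_inverse add_eq_0_iff rhom_0 rhom_add)
lemma rhom_diff: "rhom f \<Longrightarrow> f (a - b) = f a - f b"
  by (metis diff_conv_add_uminus rhom_add rhom_neg)
lemma rhom_sum: "rhom f \<Longrightarrow> f (sum g S) = (\<Sum>i\<in>S. f (g i))"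
  by (induction S rule: infinite_finite_induct) (auto simp: rhom_0 rhom_add)
lemma rhom_power: "rhom f \<Longrightarrow> f (a ^ n) = f a ^ n"
  by (induction n) (auto simp: rhom_1 rhom_mult)
lemma rhom_comp: "rhom f \<Longrightarrow> rhom g \<Longrightarrow> rhom (f \<circ> g)"
  unfolding rhom_def by auto

lemma ker_two_ideal: "rhom f \<Longrightarrow> two_ideal {a. f a = 0}"
  unfolding two_ideal_def by (auto simp: rhom_0 rhom_add rhom_neg rhom_mult)

lemma two_ideal_sum: "two_ideal J \<Longrightarrow> (\<And>i. i \<in> S \<Longrightarrow> g i \<in> J) \<Longrightarrow> sum g S \<in> J"
  by (induction S rule: infinite_finite_induct) (auto simp: two_ideal_def)

definition coef :: "('r::ring_1 \<Rightarrow> 't::ring_1) \<Rightarrow> 't \<Rightarrow> 't \<Rightarrow> nat \<Rightarrow> 'r" where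
  "coef \<iota> x t = (THE c. finite {i. c i \<noteq> 0} \<and> t = (\<Sum>i\<in>{i. c i \<noteq> 0}. \<iota> (c i) * x ^ i))"

definition Ev :: "('r::ring_1 \<Rightarrow> 't::ring_1) \<Rightarrow> 't \<Rightarrow> ('r \<Rightarrow> 'a::comm_ring_1) \<Rightarrow> 'a \<Rightarrow> 't \<Rightarrow> 'a" where
  "Ev \<iota> x \<psi> y t = (\<Sum>i\<in>{i. coef \<iota> x t i \<noteq> 0}. \<psi> (coef \<iota> x t i) * y ^ i)"

locale oreloc =
  fixes \<sigma> \<delta> :: "'r::ring_1 \<Rightarrow> 'r" and \<iota> :: "'r \<Rightarrow> 't::ring_1" and x :: 't
  assumes ore: "ore_extension \<sigma> \<delta> \<iota> x"
begin

lemma iota: "rhom \<iota>" "inj \<iota>" and xrel: "x * \<iota> r = \<iota> (\<sigma> r) * x + \<iota> (\<delta> r)"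
  using ore unfolding ore_extension_def by auto

lemma coef_prop: "finite {i. coef \<iota> x t i \<noteq> 0} \<and> t = (\<Sum>i\<in>{i. coef \<iota> x t i \<noteq> 0}. \<iota> (coef \<iota> x t i) * x ^ i)"
proof -
  have "\<exists>!c :: nat \<Rightarrow> 'r. finite {i. c i \<noteq> 0} \<and> t = (\<Sum>i\<in>{i. c i \<noteq> 0}. \<iota> (c i) * x ^ i)"
    using ore unfolding ore_extension_def by blast
  then show ?thesis unfolding coef_def by (rule theI')
qed

lemma coef_unique: "finite {i. c i \<noteq> 0} \<Longrightarrow> t = (\<Sum>i\<in>{i. c i \<noteq> 0}. \<iota> (c i) * x ^ i) \<Longrightarrow> coef \<iota> x t = c"
proof -
  assume a: "finite {i. c i \<noteq> 0}" "t = (\<Sum>i\<in>{i. c i \<noteq> 0}. \<iota> (c i) * x ^ i)"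
  have ex: "\<exists>!c :: nat \<Rightarrow> 'r. finite {i. c i \<noteq> 0} \<and> t = (\<Sum>i\<in>{i. c i \<noteq> 0}. \<iota> (c i) * x ^ i)"
    using ore unfolding ore_extension_def by blast
  show ?thesis unfolding coef_def by (rule the1_equality[OF ex]) (use a in auto)
qed

lemma expand: "finite S \<Longrightarrow> {i. coef \<iota> x t i \<noteq> 0} \<subseteq> S \<Longrightarrow> t = (\<Sum>i\<in>S. \<iota> (coef \<iota> x t i) * x ^ i)"
  by (subst coef_prop[THEN conjunct2]) (rule sum.mono_neutral_left, auto simp: rhom_0[OF iota(1)])

lemma expand_lt: "\<exists>N. \<forall>N'\<ge>N. t = (\<Sum>i<N'. \<iota> (coef \<iota> x t i) * x ^ i)"
proof -
  obtain N where "{i. coef \<iota> x t i \<noteq> 0} \<subseteq> {..<N}"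
    using coef_prop[of t] finite_nat_iff_bounded by blast
  then show ?thesis by (intro exI[of _ N] allI impI expand) auto
qed

lemma coef_sum: "finite S \<Longrightarrow> coef \<iota> x (\<Sum>i\<in>S. \<iota> (c i) * x ^ i) = (\<lambda>i. if i \<in> S then c i else 0)"
proof -
  assume S: "finite S"
  define c' where "c' = (\<lambda>i. if i \<in> S then c i else 0)"
  have sub: "{i. c' i \<noteq> 0} \<subseteq> S" by (auto simp: c'_def split: if_splits)
  have "(\<Sum>i\<in>S. \<iota> (c i) * x ^ i) = (\<Sum>i\<in>S. \<iota> (c' i) * x ^ i)" by (simp add: c'_def)
  also have "\<dots> = (\<Sum>i\<in>{i. c' i \<noteq> 0}. \<iota> (c' i) * x ^ i)"
    by (rule sum.mono_neutral_right) (use S sub in \<open>auto simp: rhom_0[OF iota(1)]\<close>)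
  finally show ?thesis unfolding c'_def[symmetric]
    by (intro coef_unique) (use S sub finite_subset in auto)
qed

context
  fixes \<psi> :: "'r \<Rightarrow> 'a::comm_ring_1" and y :: 'a
  assumes psi: "rhom \<psi>" and rel: "\<And>r. \<psi> (\<sigma> r) * y + \<psi> (\<delta> r) = y * \<psi> r"
begin

lemma ev_expand: "finite S \<Longrightarrow> {i. coef \<iota> x t i \<noteq> 0} \<subseteq> S \<Longrightarrow> Ev \<iota> x \<psi> y t = (\<Sum>i\<in>S. \<psi> (coef \<iota> x t i) * y ^ i)"
  unfolding Ev_def by (rule sum.mono_neutral_left, auto simp: rhom_0[OF psi])

lemma ev_sum: "finite S \<Longrightarrow> Ev \<iota> x \<psi> y (\<Sum>i\<in>S. \<iota> (c i) * x ^ i) = (\<Sum>i\<in>S. \<psi> (c i) * y ^ i)"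
  by (subst ev_expand[of S]) (auto simp: coef_sum split: if_splits)

lemma ev_mono: "Ev \<iota> x \<psi> y (\<iota> r * x ^ n) = \<psi> r * y ^ n"
  using ev_sum[of "{n}" "\<lambda>_. r"] by simp

lemma ev_add: "Ev \<iota> x \<psi> y (a + b) = Ev \<iota> x \<psi> y a + Ev \<iota> x \<psi> y b"
proof -
  obtain Na where Na: "\<forall>N'\<ge>Na. a = (\<Sum>i<N'. \<iota> (coef \<iota> x a i) * x ^ i)" using expand_lt by blast
  obtain Nb where Nb: "\<forall>N'\<ge>Nb. b = (\<Sum>i<N'. \<iota> (coef \<iota> x b i) * x ^ i)" using expand_lt by blast
  define N where "N = max Na Nb"
  have "a + b = (\<Sum>i<N. \<iota> (coef \<iota> x a i + coef \<iota> x b i) * x ^ i)"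
    using Na Nb unfolding N_def
    by (simp add: rhom_add[OF iota(1)] distrib_right sum.distrib)
  then have "Ev \<iota> x \<psi> y (a + b) = (\<Sum>i<N. \<psi> (coef \<iota> x a i + coef \<iota> x b i) * y ^ i)"
    by (simp add: ev_sum)
  also have "\<dots> = (\<Sum>i<N. \<psi> (coef \<iota> x a i) * y ^ i) + (\<Sum>i<N. \<psi> (coef \<iota> x b i) * y ^ i)"
    by (simp add: rhom_add[OF psi] distrib_right sum.distrib)
  also have "\<dots> = Ev \<iota> x \<psi> y a + Ev \<iota> x \<psi> y b"
    using Na Nb unfolding N_def by (metis ev_sum finite_lessThan max.cobounded1 max.cobounded2)
  finally show ?thesis .
qed

lemma ev_rhom_add: "rhom (\<lambda>t. t) \<Longrightarrow> True" by simp

lemma ev_0: "Ev \<iota> x \<psi> y 0 = 0"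
  using ev_add[of 0 0] by simp

lemma ev_neg: "Ev \<iota> x \<psi> y (- a) = - Ev \<iota> x \<psi> y a"
  using ev_add[of a "-a"] ev_0 by (simp add: eq_neg_iff_add_eq_0 add.commute)

lemma ev_diff: "Ev \<iota> x \<psi> y (a - b) = Ev \<iota> x \<psi> y a - Ev \<iota> x \<psi> y b"
  using ev_add[of a "-b"] ev_neg[of b] by simp

lemma ev_gsum: "Ev \<iota> x \<psi> y (sum g S) = (\<Sum>i\<in>S. Ev \<iota> x \<psi> y (g i))"
  by (induction S rule: infinite_finite_induct) (auto simp: ev_0 ev_add)

lemma ev_iota_mult: "Ev \<iota> x \<psi> y (\<iota> r * b) = \<psi> r * Ev \<iota> x \<psi> y b"
proof -
  obtain N where N: "b = (\<Sum>i<N. \<iota> (coef \<iota> x b i) * x ^ i)" using expand_lt by blast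
  have "\<iota> r * b = (\<Sum>i<N. \<iota> (r * coef \<iota> x b i) * x ^ i)"
    by (subst N) (simp add: sum_distrib_left rhom_mult[OF iota(1)] mult.assoc)
  then have "Ev \<iota> x \<psi> y (\<iota> r * b) = (\<Sum>i<N. \<psi> (r * coef \<iota> x b i) * y ^ i)" by (simp add: ev_sum)
  also have "\<dots> = \<psi> r * (\<Sum>i<N. \<psi> (coef \<iota> x b i) * y ^ i)"
    by (simp add: sum_distrib_left rhom_mult[OF psi] mult.assoc)
  also have "\<dots> = \<psi> r * Ev \<iota> x \<psi> y b" by (subst (2) N) (simp add: ev_sum)
  finally show ?thesis .
qed

lemma ev_x_mult: "Ev \<iota> x \<psi> y (x * b) = y * Ev \<iota> x \<psi> y b"
proof -
  obtain N where N: "b = (\<Sum>i<N. \<iota> (coef \<iota> x b i) * x ^ i)" using expand_lt by blast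
  have "x * b = (\<Sum>i<N. \<iota> (\<sigma> (coef \<iota> x b i)) * x ^ Suc i + \<iota> (\<delta> (coef \<iota> x b i)) * x ^ i)"
  proof -
    have "x * (\<iota> c * x ^ i) = \<iota> (\<sigma> c) * x ^ Suc i + \<iota> (\<delta> c) * x ^ i" for c i
      by (simp add: mult.assoc[symmetric] xrel distrib_right)
    then show ?thesis by (subst N) (simp add: sum_distrib_left)
  qed
  then have "Ev \<iota> x \<psi> y (x * b) = (\<Sum>i<N. \<psi> (\<sigma> (coef \<iota> x b i)) * y ^ Suc i + \<psi> (\<delta> (coef \<iota> x b i)) * y ^ i)"
    by (simp add: ev_gsum ev_add ev_mono del: power_Suc)
  also have "\<dots> = (\<Sum>i<N. y * (\<psi> (coef \<iota> x b i) * y ^ i))"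
  proof (rule sum.cong[OF refl])
    fix i
    have "\<psi> (\<sigma> (coef \<iota> x b i)) * y ^ Suc i + \<psi> (\<delta> (coef \<iota> x b i)) * y ^ i
        = (\<psi> (\<sigma> (coef \<iota> x b i)) * y + \<psi> (\<delta> (coef \<iota> x b i))) * y ^ i"
      by (simp add: algebra_simps)
    also have "\<dots> = y * (\<psi> (coef \<iota> x b i) * y ^ i)" by (simp add: rel mult.assoc)
    finally show "\<psi> (\<sigma> (coef \<iota> x b i)) * y ^ Suc i + \<psi> (\<delta> (coef \<iota> x b i)) * y ^ i
        = y * (\<psi> (coef \<iota> x b i) * y ^ i)" .
  qed
  also have "\<dots> = y * Ev \<iota> x \<psi> y b" by (subst (2) N) (simp add: ev_sum sum_distrib_left)
  finally show ?thesis .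
qed

lemma ev_xpow_mult: "Ev \<iota> x \<psi> y (x ^ n * b) = y ^ n * Ev \<iota> x \<psi> y b"
  by (induction n) (simp_all add: mult.assoc ev_x_mult)

lemma ev_mult: "Ev \<iota> x \<psi> y (a * b) = Ev \<iota> x \<psi> y a * Ev \<iota> x \<psi> y b"
proof -
  obtain N where N: "a = (\<Sum>i<N. \<iota> (coef \<iota> x a i) * x ^ i)" using expand_lt by blast
  have "Ev \<iota> x \<psi> y (a * b) = (\<Sum>i<N. Ev \<iota> x \<psi> y (\<iota> (coef \<iota> x a i) * (x ^ i * b)))"
    by (subst N) (simp add: sum_distrib_right ev_gsum mult.assoc)
  also have "\<dots> = (\<Sum>i<N. \<psi> (coef \<iota> x a i) * y ^ i) * Ev \<iota> x \<psi> y b"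
    by (simp add: ev_iota_mult ev_xpow_mult sum_distrib_right mult.assoc)
  also have "\<dots> = Ev \<iota> x \<psi> y a * Ev \<iota> x \<psi> y b" by (subst (2) N) (simp add: ev_sum)
  finally show ?thesis .
qed

lemma ev_iota: "Ev \<iota> x \<psi> y (\<iota> r) = \<psi> r"
  using ev_mono[of r 0] by simp

lemma ev_x: "Ev \<iota> x \<psi> y x = y"
  using ev_mono[of 1 1] by (simp add: rhom_1[OF iota(1)] rhom_1[OF psi])

lemma ev_rhom: "rhom (Ev \<iota> x \<psi> y)"
  unfolding rhom_def using ev_iota[of 1] by (simp add: rhom_1 iota psi ev_add ev_mult)

end

lemma ev_unique:
  fixes \<chi> :: "'t \<Rightarrow> 'a::comm_ring_1"
  assumes "rhom \<chi>" "rhom \<psi>" "\<And>r. \<chi> (\<iota> r) = \<psi> r" "\<chi> x = y"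
  shows "\<chi> t = Ev \<iota> x \<psi> y t"
proof -
  obtain N where N: "t = (\<Sum>i<N. \<iota> (coef \<iota> x t i) * x ^ i)"
       and Nsub: "{i. coef \<iota> x t i \<noteq> 0} \<subseteq> {..<N}"
    using coef_prop[of t] finite_nat_iff_bounded by (metis expand finite_lessThan)
  have "\<chi> t = (\<Sum>i<N. \<psi> (coef \<iota> x t i) * y ^ i)"
    by (subst N) (simp add: rhom_sum[OF assms(1)] rhom_mult[OF assms(1)] rhom_power[OF assms(1)] assms)
  also have "\<dots> = Ev \<iota> x \<psi> y t"
    unfolding Ev_def by (rule sum.mono_neutral_right) (use Nsub coef_prop[of t] in \<open>auto simp: rhom_0[OF assms(2)]\<close>)
  finally show ?thesis .
qed

end



lemma ti_add: "two_ideal J \<Longrightarrow> a \<in> J \<Longrightarrow> b \<in> J \<Longrightarrow> a + b \<in> J" unfolding two_ideal_def by blast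
lemma ti_diff: "two_ideal J \<Longrightarrow> a \<in> J \<Longrightarrow> b \<in> J \<Longrightarrow> a - b \<in> J"
  unfolding two_ideal_def by (metis diff_conv_add_uminus)
lemma ti_lmult: "two_ideal J \<Longrightarrow> a \<in> J \<Longrightarrow> r * a \<in> J" unfolding two_ideal_def by blast
lemma ti_rmult: "two_ideal J \<Longrightarrow> a \<in> J \<Longrightarrow> a * r \<in> J" unfolding two_ideal_def by blast

lemma ideal_gen_mem: "t \<in> ideal_gen S \<longleftrightarrow> (\<forall>J. two_ideal J \<and> S \<subseteq> J \<longrightarrow> t \<in> J)"
  unfolding ideal_gen_def by blast

lemma same_ker:
  assumes "falg_hom e id \<phi>1" "falg_hom e id \<phi>2" "\<And>r. \<phi>2 r = 0 \<Longrightarrow> \<phi>1 r = 0"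
  shows "\<phi>1 = \<phi>2"
proof
  fix r
  have h1: "rhom \<phi>1" "\<And>c. \<phi>1 (e c) = c" and h2: "rhom \<phi>2" "\<And>c. \<phi>2 (e c) = c"
    using assms(1,2) unfolding falg_hom_def by auto
  have "\<phi>2 (r - e (\<phi>2 r)) = 0" by (simp add: rhom_diff[OF h2(1)] h2(2))
  then have "\<phi>1 (r - e (\<phi>2 r)) = 0" by (rule assms(3))
  then show "\<phi>1 r = \<phi>2 r" by (simp add: rhom_diff[OF h1(1)] h1(2))
qed

locale mainloc = oreloc \<sigma> \<delta> \<iota> x for \<sigma> \<delta> :: "'r::ring_1 \<Rightarrow> 'r" and \<iota> :: "'r \<Rightarrow> 't::ring_1" and x :: 't +
  fixes e :: "'f::field \<Rightarrow> 'r"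
  assumes F_alg: "falg e" and aut: "falg_aut e \<sigma>" and der: "sigma_derivation e \<sigma> \<delta>"
begin

lemma e_rhom: "rhom e" and e_central: "e c * a = a * e c"
  using F_alg unfolding falg_def by auto
lemma sig: "rhom \<sigma>" "bij \<sigma>" "\<sigma> (e c) = e c"
  using aut unfolding falg_aut_def falg_hom_def by auto
lemma del_add: "\<delta> (a + b) = \<delta> a + \<delta> b" and del_mult: "\<delta> (a * b) = \<delta> a * b + \<sigma> a * \<delta> b"
  and del_e: "\<delta> (e c * a) = e c * \<delta> a"
  using der unfolding sigma_derivation_def by auto
lemma del_neg: "\<delta> (- a) = - \<delta> a"
  using del_add[of a "-a"] del_add[of 0 0] by (simp add: eq_neg_iff_add_eq_0 add.commute)
lemma del_diff: "\<delta> (a - b) = \<delta> a - \<delta> b"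
  by (metis diff_conv_add_uminus del_add del_neg)
lemma del_1: "\<delta> 1 = 0"
  using del_mult[of 1 1] by (simp add: rhom_1[OF sig(1)])
lemma del_ec: "\<delta> (e c) = 0"
  using del_e[of c 1] del_1 by simp

lemma comp_sig: "falg_hom e id \<phi> \<Longrightarrow> falg_hom e id (\<phi> \<circ> \<sigma>)"
  unfolding falg_hom_def using sig rhom_comp by auto

lemma sig_ker:
  assumes \<phi>: "falg_hom e id \<phi>"
  shows "\<sigma> ` {a. \<phi> a = 0} = {a. \<phi> a = 0} \<longleftrightarrow> \<phi> \<circ> \<sigma> = \<phi>"
proof
  assume h: "\<sigma> ` {a. \<phi> a = 0} = {a. \<phi> a = 0}"
  show "\<phi> \<circ> \<sigma> = \<phi>"
  proof (rule sym, rule same_ker[OF \<phi> comp_sig[OF \<phi>]])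
    fix r assume "(\<phi> \<circ> \<sigma>) r = 0"
    then have "\<sigma> r \<in> \<sigma> ` {a. \<phi> a = 0}" using h by auto
    then show "\<phi> r = 0" using bij_is_inj[OF sig(2)] by (auto dest: injD)
  qed
next
  assume h: "\<phi> \<circ> \<sigma> = \<phi>"
  have hh: "\<phi> (\<sigma> a) = \<phi> a" for a using h by (metis comp_apply)
  show "\<sigma> ` {a. \<phi> a = 0} = {a. \<phi> a = 0}"
  proof
    show "\<sigma> ` {a. \<phi> a = 0} \<subseteq> {a. \<phi> a = 0}" using hh by auto
    show "{a. \<phi> a = 0} \<subseteq> \<sigma> ` {a. \<phi> a = 0}"
    proof
      fix b assume b: "b \<in> {a. \<phi> a = 0}"
      obtain a where a: "b = \<sigma> a" using bij_is_surj[OF sig(2)] by (metis surjD)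
      then show "b \<in> \<sigma> ` {a. \<phi> a = 0}" using b hh by auto
    qed
  qed
qed

lemma chi_rel:
  assumes "rhom \<chi>"
  shows "\<chi> x * \<chi> (\<iota> r) = \<chi> (\<iota> (\<sigma> r)) * \<chi> x + \<chi> (\<iota> (\<delta> r))"
  using xrel[of r] by (metis assms rhom_add rhom_mult)

lemma restr:
  assumes "falg_hom (\<iota> \<circ> e) id \<chi>"
  shows "falg_hom e id (\<chi> \<circ> \<iota>)"
  using assms iota(1) rhom_comp unfolding falg_hom_def by auto

lemma ext_sub:
  assumes "rhom \<chi>" "\<And>a. a \<in> m \<Longrightarrow> \<chi> (\<iota> a) = 0"
  shows "ext_ideal \<iota> m \<subseteq> {t. \<chi> t = 0}"
  unfolding ext_ideal_def using assms by (auto simp: rhom_sum rhom_mult)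

lemma psi_ker: "Psi \<iota> {t. \<chi> t = 0} = {a. (\<chi> \<circ> \<iota>) a = 0}"
  unfolding Psi_def by auto

end



context mainloc
begin

lemma phi_delta:
  fixes \<chi> :: "'t \<Rightarrow> 'a::field"
  assumes "rhom \<chi>"
  shows "\<chi> (\<iota> (\<delta> r)) = \<chi> x * (\<chi> (\<iota> r) - \<chi> (\<iota> (\<sigma> r)))"
  using chi_rel[OF assms, of r] by (simp add: algebra_simps)

lemma part_i:
  assumes M: "M \<in> Xi (\<iota> \<circ> e)"
  shows "Psi \<iota> M \<in> Xi e \<and> \<delta> ` commutators \<subseteq> Psi \<iota> M \<and>
        ((\<sigma> ` Psi \<iota> M = Psi \<iota> M \<and> \<delta> ` Psi \<iota> M \<subseteq> Psi \<iota> M) \<or> \<sigma> ` Psi \<iota> M \<noteq> Psi \<iota> M)"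
proof -
  obtain \<chi> :: "'t \<Rightarrow> 'f" where chi: "falg_hom (\<iota> \<circ> e) id \<chi>" and Mk: "M = {t. \<chi> t = 0}"
    using M unfolding Xi_def by auto
  have cr: "rhom \<chi>" using chi unfolding falg_hom_def by auto
  define \<phi> where "\<phi> = \<chi> \<circ> \<iota>"
  have phi: "falg_hom e id \<phi>" unfolding \<phi>_def by (rule restr[OF chi])
  have pr: "rhom \<phi>" using phi unfolding falg_hom_def by auto
  have psr: "rhom (\<phi> \<circ> \<sigma>)" using comp_sig[OF phi] unfolding falg_hom_def by auto
  have P: "Psi \<iota> M = {a. \<phi> a = 0}" unfolding Mk psi_ker \<phi>_def ..
  have D: "\<phi> (\<delta> r) = \<chi> x * (\<phi> r - \<phi> (\<sigma> r))" for r
    unfolding \<phi>_def using phi_delta[OF cr] by simp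
  have 1: "Psi \<iota> M \<in> Xi e" unfolding P Xi_def using phi ker_two_ideal[OF pr] by auto
  have 2: "\<delta> ` commutators \<subseteq> Psi \<iota> M"
  proof
    fix t assume "t \<in> \<delta> ` commutators"
    then obtain a b where t: "t = \<delta> (a * b - b * a)" unfolding commutators_def by auto
    have "\<phi> (a * b - b * a) = 0" by (simp add: rhom_diff[OF pr] rhom_mult[OF pr] mult.commute)
    moreover have "(\<phi> \<circ> \<sigma>) (a * b - b * a) = 0"
      by (simp only: rhom_diff[OF psr] rhom_mult[OF psr]) (simp add: mult.commute)
    ultimately show "t \<in> Psi \<iota> M" unfolding P t using D by simp
  qed
  have 3: "(\<sigma> ` Psi \<iota> M = Psi \<iota> M \<and> \<delta> ` Psi \<iota> M \<subseteq> Psi \<iota> M) \<or> \<sigma> ` Psi \<iota> M \<noteq> Psi \<iota> M"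
  proof (cases "\<sigma> ` Psi \<iota> M = Psi \<iota> M")
    case True
    then have "\<phi> \<circ> \<sigma> = \<phi>" using sig_ker[OF phi] unfolding P by simp
    then have "\<phi> (\<sigma> r) = \<phi> r" for r by (metis comp_apply)
    then have "\<delta> ` Psi \<iota> M \<subseteq> Psi \<iota> M" unfolding P using D by auto
    then show ?thesis using True by auto
  qed auto
  show ?thesis using 1 2 3 by auto
qed

lemma part_iii:
  assumes m: "m \<in> Xi e" and com: "\<delta> ` commutators \<subseteq> m" and ns: "\<sigma> ` m \<noteq> m"
  shows "\<exists>!M. M \<in> Xi (\<iota> \<circ> e) \<and> Psi \<iota> M = m"
proof -
  obtain \<phi> :: "'r \<Rightarrow> 'f" where phi: "falg_hom e id \<phi>" and mk: "m = {a. \<phi> a = 0}"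
    using m unfolding Xi_def by auto
  have pr: "rhom \<phi>" and pe: "\<And>c. \<phi> (e c) = c" using phi unfolding falg_hom_def by auto
  have "\<phi> \<circ> \<sigma> \<noteq> \<phi>" using sig_ker[OF phi] ns unfolding mk by simp
  then obtain r0 where r0: "\<phi> (\<sigma> r0) \<noteq> \<phi> r0" by (metis comp_apply ext)
  define d where "d = \<phi> r0 - \<phi> (\<sigma> r0)"
  have d0: "d \<noteq> 0" using r0 unfolding d_def by simp
  define lam where "lam = \<phi> (\<delta> r0) / d"
  have key: "\<phi> (\<delta> a) = lam * (\<phi> a - \<phi> (\<sigma> a))" for a
  proof -
    have "a * r0 - r0 * a \<in> commutators" unfolding commutators_def by auto
    then have "\<delta> (a * r0 - r0 * a) \<in> m" using com by auto
    then have "\<phi> (\<delta> a * r0 + \<sigma> a * \<delta> r0) - \<phi> (\<delta> r0 * a + \<sigma> r0 * \<delta> a) = 0"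
      unfolding mk by (simp add: del_diff del_mult rhom_diff[OF pr])
    then have "\<phi> (\<delta> a) * \<phi> r0 + \<phi> (\<sigma> a) * \<phi> (\<delta> r0) - (\<phi> (\<delta> r0) * \<phi> a + \<phi> (\<sigma> r0) * \<phi> (\<delta> a)) = 0"
      by (simp add: rhom_add[OF pr] rhom_mult[OF pr])
    then have "\<phi> (\<delta> a) * d = \<phi> (\<delta> r0) * (\<phi> a - \<phi> (\<sigma> a))"
      unfolding d_def by (simp add: algebra_simps)
    then show ?thesis unfolding lam_def using d0 by (simp add: field_simps)
  qed
  have rel: "\<phi> (\<sigma> r) * lam + \<phi> (\<delta> r) = lam * \<phi> r" for r
    using key[of r] by (simp add: algebra_simps)
  define \<chi> where "\<chi> = Ev \<iota> x \<phi> lam"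
  have cr: "rhom \<chi>" unfolding \<chi>_def by (rule ev_rhom[OF pr rel])
  have ci: "\<chi> (\<iota> r) = \<phi> r" for r unfolding \<chi>_def by (rule ev_iota[OF pr rel])
  have chi: "falg_hom (\<iota> \<circ> e) id \<chi>" unfolding falg_hom_def using cr ci pe by simp
  define M where "M = {t. \<chi> t = 0}"
  have MX: "M \<in> Xi (\<iota> \<circ> e)" unfolding Xi_def M_def using chi ker_two_ideal[OF cr] by auto
  have MP: "Psi \<iota> M = m" unfolding M_def psi_ker mk using ci by simp
  show ?thesis
  proof (rule ex1I[of _ M])
    show "M \<in> Xi (\<iota> \<circ> e) \<and> Psi \<iota> M = m" using MX MP by simp
  next
    fix M' assume M': "M' \<in> Xi (\<iota> \<circ> e) \<and> Psi \<iota> M' = m"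
    obtain \<chi>' :: "'t \<Rightarrow> 'f" where chi': "falg_hom (\<iota> \<circ> e) id \<chi>'" and Mk: "M' = {t. \<chi>' t = 0}"
      using M' unfolding Xi_def by auto
    have cr': "rhom \<chi>'" using chi' unfolding falg_hom_def by auto
    have "\<phi> = \<chi>' \<circ> \<iota>"
    proof (rule same_ker[OF phi restr[OF chi']])
      fix r assume "(\<chi>' \<circ> \<iota>) r = 0"
      then have "r \<in> Psi \<iota> M'" unfolding Mk psi_ker by simp
      then show "\<phi> r = 0" using M' mk by auto
    qed
    then have ci': "\<chi>' (\<iota> r) = \<phi> r" for r by simp
    have "\<phi> (\<delta> r0) = \<chi>' x * d" using phi_delta[OF cr', of r0] unfolding ci' d_def .
    then have lx: "\<chi>' x = lam" unfolding lam_def using d0 by simp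
    have "\<chi>' t = \<chi> t" for t unfolding \<chi>_def by (rule ev_unique[OF cr' pr ci' lx])
    then show "M' = M" unfolding Mk M_def by simp
  qed
qed

end



lemma monom_X: "[:c:] * [:0, 1:] ^ n = monom c n"
  by (simp add: monom_altdef)

lemma const_rhom: "rhom (\<phi> :: 'a::ring_1 \<Rightarrow> 'f::field) \<Longrightarrow> rhom (\<lambda>r. [:\<phi> r:])"
  unfolding rhom_def by (auto simp: pCons_one)

context mainloc
begin

lemma kerI:
  assumes phi: "falg_hom e id \<phi>" and hs: "\<And>r. \<phi> (\<sigma> r) = \<phi> r" and hd: "\<And>r. \<phi> (\<delta> r) = 0"
  shows "{t. Ev \<iota> x \<phi> c t = 0} = ideal_gen (ext_ideal \<iota> {a. \<phi> a = 0} \<union> {x - \<iota> (e c)})"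
proof -
  have pr: "rhom \<phi>" and pe: "\<And>c. \<phi> (e c) = c" using phi unfolding falg_hom_def by auto
  have rel: "\<phi> (\<sigma> r) * c + \<phi> (\<delta> r) = c * \<phi> r" for r by (simp add: hs hd mult.commute)
  note cr = ev_rhom[OF pr rel] and ci = ev_iota[OF pr rel] and cx = ev_x[OF pr rel]
  let ?\<chi> = "Ev \<iota> x \<phi> c"
  let ?S = "ext_ideal \<iota> {a. \<phi> a = 0} \<union> {x - \<iota> (e c)}"
  show ?thesis
  proof
    show "ideal_gen ?S \<subseteq> {t. ?\<chi> t = 0}"
    proof
      fix t assume "t \<in> ideal_gen ?S"
      moreover have "two_ideal {t. ?\<chi> t = 0}" by (rule ker_two_ideal[OF cr])
      moreover have "?S \<subseteq> {t. ?\<chi> t = 0}"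
        using ext_sub[OF cr, of "{a. \<phi> a = 0}"] by (auto simp: ci pe cx rhom_diff[OF cr])
      ultimately show "t \<in> {t. ?\<chi> t = 0}" unfolding ideal_gen_mem by blast
    qed
  next
    show "{t. ?\<chi> t = 0} \<subseteq> ideal_gen ?S"
    proof
      fix t assume t0: "t \<in> {t. ?\<chi> t = 0}"
      show "t \<in> ideal_gen ?S" unfolding ideal_gen_mem
      proof (intro allI impI)
        fix J assume J: "two_ideal J \<and> ?S \<subseteq> J"
        define z where "z = \<iota> (e c)"
        have xz: "x - z \<in> J" using J unfolding z_def by auto
        have pw: "x ^ i - z ^ i \<in> J" for i
        proof (induction i)
          case 0 then show ?case using J unfolding two_ideal_def by simp
        next
          case (Suc i)
          have "x ^ Suc i - z ^ Suc i = x ^ i * (x - z) + (x ^ i - z ^ i) * z"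
            by (simp add: algebra_simps power_Suc2 del: power_Suc)
          then show ?case using Suc J xz by (metis ti_add ti_lmult ti_rmult)
        qed
        obtain N where N: "t = (\<Sum>i<N. \<iota> (coef \<iota> x t i) * x ^ i)" using expand_lt by blast
        define k where "k = coef \<iota> x t"
        have chiT: "?\<chi> t = (\<Sum>i<N. \<phi> (k i) * c ^ i)" unfolding k_def
          by (subst N) (simp add: ev_sum[OF pr rel])
        have trm: "\<iota> (k i) * x ^ i - \<iota> (e (\<phi> (k i) * c ^ i)) \<in> J" for i
        proof -
          have comm: "\<iota> (e (\<phi> (k i))) * \<iota> (e c) ^ i = \<iota> (e c) ^ i * \<iota> (e (\<phi> (k i)))"
            by (metis mult.commute rhom_mult[OF iota(1)] rhom_mult[OF e_rhom] rhom_power[OF iota(1)] rhom_power[OF e_rhom])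
          have eq: "\<iota> (k i) * x ^ i - \<iota> (e (\<phi> (k i) * c ^ i))
              = \<iota> (k i - e (\<phi> (k i))) * x ^ i + \<iota> (e (\<phi> (k i))) * (x ^ i - z ^ i)"
            unfolding z_def
            by (simp add: rhom_diff[OF iota(1)] rhom_mult[OF iota(1)] rhom_mult[OF e_rhom]
                rhom_power[OF iota(1)] rhom_power[OF e_rhom] algebra_simps comm)
          have "\<iota> (k i - e (\<phi> (k i))) * x ^ i \<in> ext_ideal \<iota> {a. \<phi> a = 0}"
            unfolding ext_ideal_def
            by (rule CollectI, rule exI[of _ 1], rule exI[of _ "\<lambda>_. k i - e (\<phi> (k i))"],
                rule exI[of _ "\<lambda>_. x ^ i"]) (simp add: rhom_diff[OF pr] pe)
          then have "\<iota> (k i - e (\<phi> (k i))) * x ^ i \<in> J" using J by auto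
          then show ?thesis unfolding eq using J pw by (metis ti_add ti_lmult)
        qed
        have "(\<Sum>i<N. \<iota> (k i) * x ^ i - \<iota> (e (\<phi> (k i) * c ^ i))) \<in> J"
          using J trm by (intro two_ideal_sum) auto
        moreover have "(\<Sum>i<N. \<iota> (k i) * x ^ i - \<iota> (e (\<phi> (k i) * c ^ i))) = t"
        proof -
          have "(\<Sum>i<N. \<iota> (e (\<phi> (k i) * c ^ i))) = \<iota> (e (?\<chi> t))"
            unfolding chiT by (simp add: rhom_sum[OF iota(1)] rhom_sum[OF e_rhom])
          also have "\<dots> = 0" using t0 by (simp add: rhom_0[OF iota(1)] rhom_0[OF e_rhom])
          finally show ?thesis using N unfolding k_def by (simp add: sum_subtractf)
        qed
        ultimately show "t \<in> J" by simp
      qed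
    qed
  qed
qed

lemma part_ii:
  assumes m: "m \<in> Xi e" and sm: "\<sigma> ` m = m" and dm: "\<delta> ` m \<subseteq> m"
  shows "\<delta> ` commutators \<subseteq> m \<and>
        two_ideal (ext_ideal \<iota> m) \<and>
        (\<exists>\<Phi> :: 't \<Rightarrow> 'f poly. falg_hom (\<iota> \<circ> e) (\<lambda>c. [:c:]) \<Phi> \<and> surj \<Phi> \<and>
            ext_ideal \<iota> m = {t. \<Phi> t = 0}) \<and>
        {M \<in> Xi (\<iota> \<circ> e). Psi \<iota> M = m} =
          (\<lambda>c. ideal_gen (ext_ideal \<iota> m \<union> {x - \<iota> (e c)})) ` UNIV \<and>
        inj (\<lambda>c. ideal_gen (ext_ideal \<iota> m \<union> {x - \<iota> (e c)}))"
proof -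
  obtain \<phi> :: "'r \<Rightarrow> 'f" where phi: "falg_hom e id \<phi>" and mk: "m = {a. \<phi> a = 0}"
    using m unfolding Xi_def by auto
  have pr: "rhom \<phi>" and pe: "\<And>c. \<phi> (e c) = c" using phi unfolding falg_hom_def by auto
  have "\<phi> \<circ> \<sigma> = \<phi>" using sig_ker[OF phi] sm unfolding mk by simp
  then have hs: "\<phi> (\<sigma> r) = \<phi> r" for r by (metis comp_apply)
  have dall: "\<delta> r \<in> m" for r
  proof -
    have "r - e (\<phi> r) \<in> m" unfolding mk by (simp add: rhom_diff[OF pr] pe)
    then have "\<delta> (r - e (\<phi> r)) \<in> m" using dm by auto
    then show ?thesis by (simp add: del_diff del_ec)
  qed
  have hd: "\<phi> (\<delta> r) = 0" for r using dall[of r] unfolding mk by simp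
  have 1: "\<delta> ` commutators \<subseteq> m" using dall by auto
  define \<psi> where "\<psi> = (\<lambda>r. [:\<phi> r:])"
  have psr: "rhom \<psi>" unfolding \<psi>_def by (rule const_rhom[OF pr])
  have relP: "\<psi> (\<sigma> r) * [:0, 1:] + \<psi> (\<delta> r) = [:0, 1:] * \<psi> r" for r
    unfolding \<psi>_def by (simp add: hs hd mult.commute)
  define \<Phi> where "\<Phi> = Ev \<iota> x \<psi> [:0, 1:]"
  have Pr: "rhom \<Phi>" unfolding \<Phi>_def by (rule ev_rhom[OF psr relP])
  have Pi: "\<Phi> (\<iota> r) = [:\<phi> r:]" for r unfolding \<Phi>_def using ev_iota[OF psr relP] by (simp add: \<psi>_def)
  have Pfh: "falg_hom (\<iota> \<circ> e) (\<lambda>c. [:c:]) \<Phi>" unfolding falg_hom_def using Pr Pi pe by simp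
  have Psurj: "surj \<Phi>"
  proof (rule surjI)
    fix p :: "'f poly"
    have "\<Phi> (\<Sum>i\<in>{..degree p}. \<iota> (e (coeff p i)) * x ^ i) = (\<Sum>i\<in>{..degree p}. \<psi> (e (coeff p i)) * [:0, 1:] ^ i)"
      unfolding \<Phi>_def by (rule ev_sum[OF psr relP]) simp
    also have "\<dots> = p" unfolding \<psi>_def pe monom_X by (rule poly_as_sum_of_monoms)
    finally show "\<Phi> (\<Sum>i\<in>{..degree p}. \<iota> (e (coeff p i)) * x ^ i) = p" .
  qed
  have Pker: "ext_ideal \<iota> m = {t. \<Phi> t = 0}"
  proof
    show "ext_ideal \<iota> m \<subseteq> {t. \<Phi> t = 0}" by (rule ext_sub[OF Pr]) (simp add: Pi mk)
  next
    show "{t. \<Phi> t = 0} \<subseteq> ext_ideal \<iota> m"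
    proof
      fix t assume t0: "t \<in> {t. \<Phi> t = 0}"
      obtain N where N: "t = (\<Sum>i<N. \<iota> (coef \<iota> x t i) * x ^ i)" using expand_lt by blast
      have "\<Phi> t = (\<Sum>i<N. monom (\<phi> (coef \<iota> x t i)) i)"
        unfolding \<Phi>_def by (subst N, subst ev_sum[OF psr relP], simp) (simp only: \<psi>_def monom_X)
      then have z: "(\<Sum>i<N. monom (\<phi> (coef \<iota> x t i)) i) = 0" using t0 by simp
      have "\<phi> (coef \<iota> x t j) = 0" if "j < N" for j
        using arg_cong[OF z, of "\<lambda>p. coeff p j"] that by (simp add: coeff_sum)
      then show "t \<in> ext_ideal \<iota> m" unfolding ext_ideal_def mk
        by (intro CollectI exI[of _ N] exI[of _ "coef \<iota> x t"] exI[of _ "\<lambda>j. x ^ j"]) (use N in auto)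
    qed
  qed
  have 2: "two_ideal (ext_ideal \<iota> m)" unfolding Pker by (rule ker_two_ideal[OF Pr])
  have relc: "\<phi> (\<sigma> r) * c + \<phi> (\<delta> r) = c * \<phi> r" for r c by (simp add: hs hd mult.commute)
  let ?I = "\<lambda>c. ideal_gen (ext_ideal \<iota> m \<union> {x - \<iota> (e c)})"
  have KI: "{t. Ev \<iota> x \<phi> c t = 0} = ?I c" for c unfolding mk by (rule kerI[OF phi hs hd])
  have IX: "?I c \<in> Xi (\<iota> \<circ> e) \<and> Psi \<iota> (?I c) = m" for c
  proof -
    note cr = ev_rhom[OF pr relc[of _ c]] and ci = ev_iota[OF pr relc[of _ c]]
    have "falg_hom (\<iota> \<circ> e) id (Ev \<iota> x \<phi> c)" unfolding falg_hom_def using cr ci pe by simp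
    moreover have "?I c = {t. Ev \<iota> x \<phi> c t = 0}" by (simp only: KI)
    ultimately have X1: "?I c \<in> Xi (\<iota> \<circ> e)" unfolding Xi_def using ker_two_ideal[OF cr] by auto
    have "Psi \<iota> (?I c) = Psi \<iota> {t. Ev \<iota> x \<phi> c t = 0}" by (simp only: KI)
    also have "\<dots> = m" unfolding psi_ker mk using ci by simp
    finally show ?thesis using X1 by simp
  qed
  have 3: "{M \<in> Xi (\<iota> \<circ> e). Psi \<iota> M = m} = ?I ` UNIV"
  proof
    show "?I ` UNIV \<subseteq> {M \<in> Xi (\<iota> \<circ> e). Psi \<iota> M = m}" using IX by auto
  next
    show "{M \<in> Xi (\<iota> \<circ> e). Psi \<iota> M = m} \<subseteq> ?I ` UNIV"
    proof
      fix M' assume M': "M' \<in> {M \<in> Xi (\<iota> \<circ> e). Psi \<iota> M = m}"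
      obtain \<chi>' :: "'t \<Rightarrow> 'f" where chi': "falg_hom (\<iota> \<circ> e) id \<chi>'" and Mk: "M' = {t. \<chi>' t = 0}"
        using M' unfolding Xi_def by auto
      have cr': "rhom \<chi>'" using chi' unfolding falg_hom_def by auto
      have "\<phi> = \<chi>' \<circ> \<iota>"
      proof (rule same_ker[OF phi restr[OF chi']])
        fix r assume "(\<chi>' \<circ> \<iota>) r = 0"
        then have "r \<in> Psi \<iota> M'" unfolding Mk psi_ker by simp
        then show "\<phi> r = 0" using M' mk by auto
      qed
      then have ci': "\<chi>' (\<iota> r) = \<phi> r" for r by simp
      define lam where "lam = \<chi>' x"
      have "\<chi>' t = Ev \<iota> x \<phi> lam t" for t unfolding lam_def by (rule ev_unique[OF cr' pr ci' refl])
      then have "M' = {t. Ev \<iota> x \<phi> lam t = 0}" unfolding Mk by simp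
      also have "\<dots> = ?I lam" by (simp only: KI)
      finally have "M' = ?I lam" .
      then show "M' \<in> ?I ` UNIV" by simp
    qed
  qed
  have 4: "inj ?I"
  proof (rule injI)
    fix c c' assume h: "?I c = ?I c'"
    have "x - \<iota> (e c') \<in> ?I c'" unfolding ideal_gen_mem by blast
    then have "x - \<iota> (e c') \<in> {t. Ev \<iota> x \<phi> c t = 0}" using h KI[of c] by simp
    then show "c = c'"
      by (simp add: rhom_diff[OF ev_rhom[OF pr relc[of _ c]]] ev_x[OF pr relc[of _ c]] ev_iota[OF pr relc[of _ c]] pe)
  qed
  show ?thesis using 1 2 Pfh Psurj Pker 3 4 by blast
qed

end

theorem theorem4p2:
  fixes e :: "'f::field \<Rightarrow> 'r::ring_1"
    and \<sigma> \<delta> :: "'r \<Rightarrow> 'r"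
    and \<iota> :: "'r \<Rightarrow> 't::ring_1"
    and x :: 't
  assumes alg_closed: "\<forall>p :: 'f poly. degree p > 0 \<longrightarrow> (\<exists>z. poly p z = 0)"
    and F_alg: "falg e"
    and aut: "falg_aut e \<sigma>"
    and der: "sigma_derivation e \<sigma> \<delta>"
    and ore: "ore_extension \<sigma> \<delta> \<iota> x"
  shows
    "(\<forall>M \<in> Xi (\<iota> \<circ> e). Psi \<iota> M \<in> Xi e \<and>
        \<delta> ` commutators \<subseteq> Psi \<iota> M \<and>
        ((\<sigma> ` Psi \<iota> M = Psi \<iota> M \<and> \<delta> ` Psi \<iota> M \<subseteq> Psi \<iota> M) \<or> \<sigma> ` Psi \<iota> M \<noteq> Psi \<iota> M))
   \<and> (\<forall>m \<in> Xi e. \<sigma> ` m = m \<and> \<delta> ` m \<subseteq> m \<longrightarrow>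
        \<delta> ` commutators \<subseteq> m \<and>
        two_ideal (ext_ideal \<iota> m) \<and>
        (\<exists>\<phi> :: 't \<Rightarrow> 'f poly. falg_hom (\<iota> \<circ> e) (\<lambda>c. [:c:]) \<phi> \<and> surj \<phi> \<and>
            ext_ideal \<iota> m = {t. \<phi> t = 0}) \<and>
        {M \<in> Xi (\<iota> \<circ> e). Psi \<iota> M = m} =
          (\<lambda>c. ideal_gen (ext_ideal \<iota> m \<union> {x - \<iota> (e c)})) ` UNIV \<and>
        inj (\<lambda>c. ideal_gen (ext_ideal \<iota> m \<union> {x - \<iota> (e c)})))
   \<and> (\<forall>m \<in> Xi e. \<delta> ` commutators \<subseteq> m \<and> \<sigma> ` m \<noteq> m \<longrightarrow>
        (\<exists>!M. M \<in> Xi (\<iota> \<circ> e) \<and> Psi \<iota> M = m))"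
  proof -
  interpret mainloc \<sigma> \<delta> \<iota> x e
    by (intro mainloc.intro oreloc.intro mainloc_axioms.intro) (use ore F_alg aut der in auto)
  show ?thesis
  proof (intro conjI)
    show "\<forall>M \<in> Xi (\<iota> \<circ> e). Psi \<iota> M \<in> Xi e \<and>
        \<delta> ` commutators \<subseteq> Psi \<iota> M \<and>
        ((\<sigma> ` Psi \<iota> M = Psi \<iota> M \<and> \<delta> ` Psi \<iota> M \<subseteq> Psi \<iota> M) \<or> \<sigma> ` Psi \<iota> M \<noteq> Psi \<iota> M)"
      by (intro ballI part_i)
  next
    show "\<forall>m \<in> Xi e. \<delta> ` commutators \<subseteq> m \<and> \<sigma> ` m \<noteq> m \<longrightarrow>
        (\<exists>!M. M \<in> Xi (\<iota> \<circ> e) \<and> Psi \<iota> M = m)"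
      by (intro ballI impI part_iii) auto
  qed (intro ballI impI part_ii; simp)
qed

end
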